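(* Let $\varepsilon>0$ and $\delta\in(0,1]$, and let $\pi_{\mathrm{opt}}$ be the optimal partition selection primitive for $(\varepsilon,\delta)$-differential privacy, i.e. the function $\mathbb{N}\to[0,1]$ given by $\pi_{\mathrm{opt}}(0)=0$ and $\pi_{\mathrm{opt}}(n+1)=\min\left(e^{\varepsilon}\pi_{\mathrm{opt}}(n)+\delta,\;1-e^{-\varepsilon}(1-\pi_{\mathrm{opt}}(n)-\delta),\;1\right)$ for $n\ge0$. Then there exist integers $n_1,n_2$ with $0<n_1\le n_2$ such that: $\pi_{\mathrm{opt}}(n)=e^{\varepsilon}\pi_{\mathrm{opt}}(n-1)+\delta$ for $0<n\le n_1$; $\pi_{\mathrm{opt}}(n)=1-e^{-\varepsilon}\left(1-\pi_{\mathrm{opt}}(n-1)-\delta\right)$ for $n_1<n\le n_2$; and $\pi_{\mathrm{opt}}(n)=1$ for $n>n_2$.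
   Context: $\mathbb{N}=\{0,1,2,\dots\}$. (The recurrence given characterizes the maximal function $\pi:\mathbb{N}\to[0,1]$ with $\pi(0)=0$ such that releasing a partition with $n$ users with probability $\pi(n)$ is $(\varepsilon,\delta)$-differentially private with respect to adding or removing one user.) *)

theory Defs
  imports Complex_Main
begin

primrec pi_opt :: "real \<Rightarrow> real \<Rightarrow> nat \<Rightarrow> real" where
  "pi_opt eps delta 0 = 0"
| "pi_opt eps delta (Suc n) =
     min (exp eps * pi_opt eps delta n + delta)
         (min (1 - exp (- eps) * (1 - pi_opt eps delta n - delta)) 1)"

end

theory Submission
  imports Defs
begin

lemma step_eq:
  "pi_opt eps delta (Suc n) = min (exp eps * pi_opt eps delta n + delta)
     (min (1 - exp (- eps) * (1 - pi_opt eps delta n - delta)) 1)"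
  by simp

lemma alg_f:
  fixes E F p d :: real
  assumes "E > 1" "E * F = 1" "p \<ge> 0" "(E+1)*p \<le> 1 - d" "d > 0"
  shows "min (E*p + d) (min (1 - F*(1-p-d)) 1) = E*p + d"
proof -
  have F: "F = 1/E" using assms by (simp add: field_simps)
  have "E*p + d \<le> 1 - F*(1-p-d)"
  proof -
    have "(E*E - 1)*p \<le> (E - 1)*(1-d)"
    proof -
      have "(E*E-1)*p = (E-1)*((E+1)*p)" by (simp add: algebra_simps)
      also have "\<dots> \<le> (E-1)*(1-d)" using assms by (intro mult_left_mono) auto
      finally show ?thesis .
    qed
    then show ?thesis using assms unfolding F by (simp add: field_simps)
  qed
  moreover have "E*p + d \<le> 1"
  proof -
    have "E*p \<le> (E+1)*p" using assms by (simp add: algebra_simps)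
    then show ?thesis using assms by linarith
  qed
  ultimately show ?thesis by simp
qed

lemma alg_g:
  fixes E F p d :: real
  assumes "E > 1" "E * F = 1" "p \<ge> 0" "(E+1)*p > 1 - d" "p + d \<le> 1"
  shows "min (E*p + d) (min (1 - F*(1-p-d)) 1) = 1 - F*(1-p-d)"
proof -
  have F: "F = 1/E" using assms by (simp add: field_simps)
  have "E*p + d \<ge> 1 - F*(1-p-d)"
  proof -
    have "(E*E - 1)*p \<ge> (E - 1)*(1-d)"
    proof -
      have "(E*E-1)*p = (E-1)*((E+1)*p)" by (simp add: algebra_simps)
      moreover have "(E-1)*((E+1)*p) \<ge> (E-1)*(1-d)" using assms by (intro mult_left_mono) auto
      ultimately show ?thesis by linarith
    qed
    then show ?thesis using assms unfolding F by (simp add: field_simps)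
  qed
  moreover have "1 - F*(1-p-d) \<le> 1"
  proof -
    have "F > 0" using assms F by simp
    then have "F*(1-p-d) \<ge> 0" using assms by simp
    then show ?thesis by simp
  qed
  ultimately show ?thesis by simp
qed

lemma alg_one:
  fixes E F p d :: real
  assumes "E > 1" "E * F = 1" "p \<ge> 0" "p \<le> 1" "p + d > 1"
  shows "min (E*p + d) (min (1 - F*(1-p-d)) 1) = 1"
proof -
  have F: "F = 1/E" using assms by (simp add: field_simps)
  have "E*p \<ge> p" using mult_right_mono[of 1 E p] assms by simp
  hence "E*p + d \<ge> 1" using assms by linarith
  moreover have "1 - F*(1-p-d) \<ge> 1"
  proof -
    have "F > 0" using assms F by simp
    then have "F*(1-p-d) \<le> 0" using assms by (simp add: mult_le_0_iff)
    then show ?thesis by simp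
  qed
  ultimately show ?thesis by simp
qed

lemma alg_bounds:
  fixes E F p d :: real
  assumes "E > 1" "E * F = 1" "p \<ge> 0" "p \<le> 1" "d > 0"
  shows "p \<le> min (E*p + d) (min (1 - F*(1-p-d)) 1)"
    and "min (E*p + d) (min (1 - F*(1-p-d)) 1) \<le> 1"
    and "p + d \<le> 1 \<Longrightarrow> p + F*d \<le> min (E*p + d) (min (1 - F*(1-p-d)) 1)"
proof -
  have F: "F = 1/E" using assms by (simp add: field_simps)
  have F1: "F > 0" "F < 1" using assms F by auto
  have "E*p \<ge> p" using mult_right_mono[of 1 E p] assms by simp
  have "F*(1-p) \<le> 1 - p" using F1 assms by (simp add: mult_left_le_one_le)
  have "F*d \<le> d" using F1 assms by simp
  have "F*d \<ge> 0" using F1 assms by simp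
  have eq: "F*(1-p-d) = F*(1-p) - F*d" by (simp add: algebra_simps)
  show "p \<le> min (E*p + d) (min (1 - F*(1-p-d)) 1)"
  proof -
    have "p \<le> E*p + d" using \<open>E*p \<ge> p\<close> assms by linarith
    moreover have "p \<le> 1 - F*(1-p-d)" unfolding eq
      using \<open>F*(1-p) \<le> 1 - p\<close> \<open>F*d \<ge> 0\<close> by linarith
    ultimately show ?thesis using assms by simp
  qed
  show "min (E*p + d) (min (1 - F*(1-p-d)) 1) \<le> 1" by simp
  assume pd: "p + d \<le> 1"
  have "p + F*d \<le> E*p + d" using \<open>E*p \<ge> p\<close> \<open>F*d \<le> d\<close> by linarith
  moreover have "p + F*d \<le> 1 - F*(1-p-d)" unfolding eq
    using \<open>F*(1-p) \<le> 1 - p\<close> by linarith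
  moreover have "p + F*d \<le> 1" using \<open>F*d \<le> d\<close> pd by linarith
  ultimately show "p + F*d \<le> min (E*p + d) (min (1 - F*(1-p-d)) 1)" by simp
qed

theorem lemma2:
  fixes eps delta :: real
  assumes "eps > 0" and "delta > 0" and "delta \<le> 1"
  shows "\<exists>n1 n2 :: nat. 0 < n1 \<and> n1 \<le> n2 \<and>
    (\<forall>n. 0 < n \<and> n \<le> n1 \<longrightarrow>
       pi_opt eps delta n = exp eps * pi_opt eps delta (n - 1) + delta) \<and>
    (\<forall>n. n1 < n \<and> n \<le> n2 \<longrightarrow>
       pi_opt eps delta n = 1 - exp (- eps) * (1 - pi_opt eps delta (n - 1) - delta)) \<and>
    (\<forall>n. n2 < n \<longrightarrow> pi_opt eps delta n = 1)"
proof -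
  define E where "E = exp eps"
  define F where "F = exp (- eps)"
  define p where "p = pi_opt eps delta"
  have E1: "E > 1" using assms E_def by simp
  have EF: "E * F = 1" unfolding E_def F_def by (simp add: exp_minus field_simps)
  have Fpos: "F > 0" unfolding F_def by simp
  have step: "p (Suc n) = min (E*p n + delta) (min (1 - F*(1-p n-delta)) 1)" for n
    unfolding p_def E_def F_def by simp
  have bnd: "0 \<le> p n \<and> p n \<le> 1" for n
  proof (induction n)
    case 0 then show ?case by (simp add: p_def)
  next
    case (Suc n)
    then show ?case unfolding step using alg_bounds(1,2)[OF E1 EF _ _ assms(2), of "p n"] by auto
  qed
  have mono1: "p n \<le> p (Suc n)" for n
    unfolding step using alg_bounds(1)[OF E1 EF _ _ assms(2), of "p n"] bnd by auto
  have monop: "m \<le> n \<Longrightarrow> p m \<le> p n" for m n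
    by (induction n rule: dec_induct) (auto intro: order_trans mono1)
  have ex: "\<exists>n. p n + delta > 1"
  proof (rule ccontr)
    assume "\<not> ?thesis"
    hence all: "p n + delta \<le> 1" for n by (simp add: not_less)
    have lin: "p n \<ge> real n * (F*delta)" for n
    proof (induction n)
      case 0 then show ?case by (simp add: p_def)
    next
      case (Suc n)
      have "p n + F*delta \<le> p (Suc n)" unfolding step
        using alg_bounds(3)[OF E1 EF _ _ assms(2), of "p n"] bnd all by auto
      then show ?case using Suc by (simp add: algebra_simps)
    qed
    have "F*delta > 0" using Fpos assms by simp
    then obtain n where "real n * (F*delta) > 1" using reals_Archimedean3 by blast
    with lin[of n] bnd[of n] show False by simp
  qed
  define c where "c = (1 - delta)/(E+1)"
  have cdef: "(E+1) * q \<le> 1 - delta \<longleftrightarrow> q \<le> c" for q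
    unfolding c_def using E1 by (simp add: field_simps)
  define n1 where "n1 = (LEAST n. p n > c)"
  define n2 where "n2 = (LEAST n. p n + delta > 1)"
  obtain m where m: "p m + delta > 1" using ex by blast
  have pn2: "p n2 + delta > 1" unfolding n2_def using m by (rule LeastI)
  have "c \<le> 1 - delta" unfolding c_def using E1 assms by (simp add: field_simps)
  hence pn2c: "p n2 > c" using pn2 by linarith
  have pn1: "p n1 > c" unfolding n1_def using pn2c by (rule LeastI)
  have n12: "n1 \<le> n2" unfolding n1_def using pn2c by (rule Least_le)
  have c0: "c \<ge> 0" unfolding c_def using E1 assms by simp
  have n1pos: "0 < n1" using pn1 c0 by (cases n1) (auto simp: p_def)
  have below1: "k < n1 \<Longrightarrow> p k \<le> c" for k unfolding n1_def using not_less_Least by force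
  have below2: "k < n2 \<Longrightarrow> p k + delta \<le> 1" for k unfolding n2_def using not_less_Least by force
  show ?thesis
  proof (intro exI conjI allI impI)
    show "0 < n1" by fact
    show "n1 \<le> n2" by fact
    fix n assume "0 < n \<and> n \<le> n1"
    then obtain k where k: "n = Suc k" "k < n1" by (cases n) auto
    have "(E+1) * p k \<le> 1 - delta" using cdef below1[OF k(2)] by blast
    then show "pi_opt eps delta n = exp eps * pi_opt eps delta (n - 1) + delta"
      using alg_f[OF E1 EF _ _ assms(2), of "p k"] bnd[of k] k step[of k]
      by (simp add: p_def E_def)
  next
    fix n assume a: "n1 < n \<and> n \<le> n2"
    then obtain k where k: "n = Suc k" "n1 \<le> k" "k < n2" by (cases n) auto
    have "p k > c" using pn1 monop[OF k(2)] by linarith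
    hence "(E+1) * p k > 1 - delta" using cdef not_le by blast
    then show "pi_opt eps delta n = 1 - exp (- eps) * (1 - pi_opt eps delta (n - 1) - delta)"
      using alg_g[OF E1 EF _ _ below2[OF k(3)], of] bnd[of k] k step[of k]
      by (simp add: p_def F_def)
  next
    fix n assume a: "n2 < n"
    then obtain k where k: "n = Suc k" "n2 \<le> k" by (cases n) auto
    have "p k + delta > 1" using pn2 monop[OF k(2)] by linarith
    then show "pi_opt eps delta n = 1"
      using alg_one[OF E1 EF] bnd[of k] k step[of k]
      by (simp add: p_def)
  qed
qed

end
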